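(* For every $n$-dimensional (compact) polyhedron $P$ there is a natural number $m$ such that the cone over $P$ can be embedded in the product of $n+1$ copies of an $m$-od.
   Context: A polyhedron is the underlying space of a finite regular CW complex (equivalently, a finite simplicial complex). An $m$-od is the cone over an $m$-element set. *)

theory Defs
  imports "HOL-Analysis.Analysis"
begin

text \<open>Cone over a set P (in a real vector space): realised in P \<times> [0,1] with
  apex (0,0); for compact P this is homeomorphic to P \<times> [0,1] / P \<times> {0}.\<close>
definition cone_over :: "'a::real_vector set \<Rightarrow> ('a \<times> real) set" where
  "cone_over P = {(t *\<^sub>R x, t) | x t. x \<in> P \<and> 0 \<le> t \<and> t \<le> 1}"

text \<open>The m-od: the cone over an m-element set (here the set {0,...,m-1} of reals).\<close>
definition m_od :: "nat \<Rightarrow> (real \<times> real) set" where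
  "m_od m = cone_over {real k | k. k < m}"

definition power_space :: "nat \<Rightarrow> ('b::zero) set \<Rightarrow> (nat \<Rightarrow> 'b) set" where
  "power_space n X = {g. (\<forall>i\<le>n. g i \<in> X) \<and> (\<forall>i>n. g i = 0)}"

definition polyhedron_of_dim :: "nat \<Rightarrow> 'a::euclidean_space set \<Rightarrow> bool" where
  "polyhedron_of_dim n P \<longleftrightarrow>
     (\<exists>K. simplicial_complex K \<and> \<Union>K = P \<and>
          (\<exists>S\<in>K. int n simplex S) \<and>
          (\<forall>S\<in>K. \<forall>k. k simplex S \<longrightarrow> k \<le> int n))"

end

theory Submission
  imports Defs
begin


definition gap :: "nat set \<Rightarrow> (nat \<Rightarrow> real) \<Rightarrow> real \<Rightarrow> nat set \<Rightarrow> real" where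
  "gap A u c F = max 0 (Min (u ` F) - Max (insert c (u ` (A - F))))"

lemma gap_tele:
  assumes "finite A" "\<forall>j\<in>A. c \<le> u j" "i \<in> A"
  shows "(\<Sum>F\<in>{F. F \<subseteq> A \<and> F \<noteq> {} \<and> i \<in> F}. gap A u c F) = u i - c"
  using assms
proof (induction "card A" arbitrary: A c i rule: less_induct)
  case less
  have fin: "finite A" and cle: "\<forall>j\<in>A. c \<le> u j" and iA: "i \<in> A" by fact+
  have "A \<noteq> {}" using iA by auto
  obtain w where wA: "w \<in> A" and wmin: "\<forall>x\<in>A. u w \<le> u x"
  proof -
    have "Min (u ` A) \<in> u ` A" using fin \<open>A \<noteq> {}\<close> by simp
    then obtain w where "w \<in> A" "u w = Min (u ` A)" by auto
    moreover have "\<forall>x\<in>A. Min (u ` A) \<le> u x" using fin by simp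
    ultimately show ?thesis using that by auto
  qed
  define A' where "A' = A - {w}"
  have finA': "finite A'" using fin by (simp add: A'_def)
  have a: "gap A u c F = gap A' u (u w) F" if F: "F \<subseteq> A'" "F \<noteq> {}" for F
  proof -
    have eq: "A - F = insert w (A' - F)" using F wA by (auto simp: A'_def)
    have "Max (insert c (u ` (A - F))) = Max (insert (u w) (u ` (A' - F)))"
    proof -
      have "Max (insert c (u ` (A - F))) = max c (Max (insert (u w) (u ` (A' - F))))"
        unfolding eq using finA' by (simp add: Max_insert)
      moreover have "Max (insert (u w) (u ` (A' - F))) \<ge> u w" using finA' by simp
      moreover have "c \<le> u w" using cle wA by auto
      ultimately show ?thesis by simp
    qed
    then show ?thesis unfolding gap_def by simp
  qed
  have b: "gap A u c F = 0" if F: "F \<subseteq> A" "w \<in> F" "F \<noteq> A" for F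
  proof -
    obtain y where y: "y \<in> A - F" using F by auto
    have finF: "finite F" using F fin finite_subset by auto
    have "Min (u ` F) \<le> u w" using F finF by simp
    also have "u w \<le> u y" using wmin y by auto
    also have "u y \<le> Max (insert c (u ` (A - F)))" using y fin by simp
    finally show ?thesis unfolding gap_def by simp
  qed
  have c: "gap A u c A = u w - c"
  proof -
    have "Min (u ` A) = u w"
      using wmin wA fin by (intro Min_eqI) auto
    then show ?thesis unfolding gap_def using cle wA by simp
  qed
  define S1 where "S1 = {F. F \<subseteq> A' \<and> F \<noteq> {} \<and> i \<in> F}"
  define S2 where "S2 = {F. F \<subseteq> A \<and> w \<in> F \<and> i \<in> F}"
  have Seq: "{F. F \<subseteq> A \<and> F \<noteq> {} \<and> i \<in> F} = S1 \<union> S2"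
    unfolding S1_def S2_def A'_def by auto
  have fS1: "finite S1" unfolding S1_def using finA' by (auto intro: finite_subset[of _ "Pow A'"])
  have fS2: "finite S2" unfolding S2_def using fin by (auto intro: finite_subset[of _ "Pow A"])
  have disj: "S1 \<inter> S2 = {}" unfolding S1_def S2_def A'_def by auto
  have sum2: "(\<Sum>F\<in>S2. gap A u c F) = u w - c"
  proof -
    have AS2: "A \<in> S2" unfolding S2_def using wA iA by auto
    have "(\<Sum>F\<in>S2. gap A u c F) = gap A u c A + (\<Sum>F\<in>S2 - {A}. gap A u c F)"
      using sum.remove[OF fS2 AS2] by simp
    also have "(\<Sum>F\<in>S2 - {A}. gap A u c F) = 0"
      by (rule sum.neutral) (auto simp: S2_def intro: b)
    finally show ?thesis using c by simp
  qed
  have sum1: "(\<Sum>F\<in>S1. gap A u c F) = (if i = w then 0 else u i - u w)"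
  proof (cases "i = w")
    case True
    then have "S1 = {}" unfolding S1_def A'_def by auto
    then show ?thesis using True by simp
  next
    case False
    have "(\<Sum>F\<in>S1. gap A u c F) = (\<Sum>F\<in>S1. gap A' u (u w) F)"
      by (rule sum.cong) (auto simp: S1_def intro: a)
    also have "\<dots> = u i - u w" unfolding S1_def
    proof (rule less.hyps)
      show "card A' < card A" unfolding A'_def using fin wA by (metis card_Diff1_less)
      show "finite A'" by fact
      show "\<forall>j\<in>A'. u w \<le> u j" using wmin by (auto simp: A'_def)
      show "i \<in> A'" using iA False by (auto simp: A'_def)
    qed
    finally show ?thesis using False by simp
  qed
  show ?case unfolding Seq sum.union_disjoint[OF fS1 fS2 disj] sum1 sum2 by auto
qed


lemma homeomorphic_same_fibres:
  fixes f :: "'z::t2_space \<Rightarrow> 'b::t2_space" and g :: "'z \<Rightarrow> 'c::t2_space"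
  assumes Z: "compact Z" and cf: "continuous_on Z f" and cg: "continuous_on Z g"
    and fib: "\<And>z z'. z \<in> Z \<Longrightarrow> z' \<in> Z \<Longrightarrow> f z = f z' \<longleftrightarrow> g z = g z'"
  shows "f ` Z homeomorphic g ` Z"
proof -
  define h where "h = (\<lambda>a. g (SOME z. z \<in> Z \<and> f z = a))"
  have hf: "h (f z) = g z" if "z \<in> Z" for z
  proof -
    have "(SOME y. y \<in> Z \<and> f y = f z) \<in> Z \<and> f (SOME y. y \<in> Z \<and> f y = f z) = f z"
      by (rule someI[of _ z]) (use that in auto)
    then show ?thesis unfolding h_def using fib that by blast
  qed
  have himg: "h ` (f ` Z) = g ` Z" using hf by (auto simp: image_iff)
  have cont: "continuous_on (f ` Z) h"
    unfolding continuous_on_open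
  proof (intro allI impI)
    fix T assume T: "openin (top_of_set (h ` f ` Z)) T"
    define U where "U = f ` Z \<inter> h -` T"
    have "Z \<inter> f -` U = Z \<inter> g -` T" unfolding U_def using hf fib by auto
    moreover have "openin (top_of_set Z) (Z \<inter> g -` T)"
      using cg T himg unfolding continuous_on_open by auto
    ultimately have "openin (top_of_set Z) (Z \<inter> f -` U)" by simp
    then show "openin (top_of_set (f ` Z)) (f ` Z \<inter> h -` T)"
      using Abstract_Topology_2.continuous_imp_quotient_map[OF cf refl Z, of U] unfolding U_def by auto
  qed
  have inj: "inj_on h (f ` Z)"
    by (auto simp: inj_on_def hf fib)
  have "f ` Z homeomorphic h ` (f ` Z)"
    by (rule homeomorphic_compact[OF compact_continuous_image[OF cf Z] cont refl inj])
  then show ?thesis using himg by simp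
qed

lemma continuous_on_Min_fam:
  fixes f :: "'i \<Rightarrow> 'a::topological_space \<Rightarrow> real"
  assumes "finite F" "F \<noteq> {}" "\<And>i. i \<in> F \<Longrightarrow> continuous_on S (f i)"
  shows "continuous_on S (\<lambda>x. Min ((\<lambda>i. f i x) ` F))"
  using assms
proof (induction F rule: finite_ne_induct)
  case (singleton i) then show ?case by simp
next
  case (insert i F)
  then show ?case by (simp add: continuous_on_min)
qed

lemma continuous_on_Max_fam:
  fixes f :: "'i \<Rightarrow> 'a::topological_space \<Rightarrow> real"
  assumes "finite F" "F \<noteq> {}" "\<And>i. i \<in> F \<Longrightarrow> continuous_on S (f i)"
  shows "continuous_on S (\<lambda>x. Max ((\<lambda>i. f i x) ` F))"
  using assms
proof (induction F rule: finite_ne_induct)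
  case (singleton i) then show ?case by simp
next
  case (insert i F)
  then show ?case by (simp add: continuous_on_max)
qed


lemma compact_cube: "compact {u::nat\<Rightarrow>real. \<forall>i. u i \<in> {0..1}}"
proof -
  have "compactin (product_topology (\<lambda>i. euclidean) UNIV) (PiE UNIV (\<lambda>i::nat. {0..1::real}))"
    by (simp add: compactin_PiE)
  then have "compact (PiE UNIV (\<lambda>i::nat. {0..1::real}))"
    by (simp add: euclidean_product_topology)
  moreover have "PiE UNIV (\<lambda>i::nat. {0..1::real}) = {u. \<forall>i. u i \<in> {0..1}}"
    by (auto simp: PiE_def Pi_def extensional_def)
  ultimately show ?thesis by simp
qed

lemma cont_coord: "continuous_on S (\<lambda>u::nat\<Rightarrow>real. u i)"
  by (rule continuous_on_subset[OF continuous_on_product_coordinates]) simp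

lemma cont_gap:
  assumes "finite A" "finite F" "F \<noteq> {}"
  shows "continuous_on S (\<lambda>u. gap A u 0 F)"
proof (cases "A - F = {}")
  case True
  have "continuous_on S (\<lambda>u. max 0 (Min ((\<lambda>i. u i) ` F) - 0))"
    by (intro continuous_intros continuous_on_Min_fam assms cont_coord)
  then show ?thesis unfolding gap_def True by simp
next
  case False
  have fin: "finite (A - F)" using assms by simp
  have "continuous_on S (\<lambda>u. max 0 (Min ((\<lambda>i. u i) ` F) - max 0 (Max ((\<lambda>i. u i) ` (A - F)))))"
    by (intro continuous_intros continuous_on_Min_fam continuous_on_Max_fam assms cont_coord fin False)
  then show ?thesis unfolding gap_def using False fin by (simp add: Max_insert)
qed

lemma gap_nonneg: "0 \<le> gap A u c F" unfolding gap_def by simp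

lemma gap_le:
  assumes "finite A" "finite F" "i \<in> F" "0 \<le> u i"
  shows "gap A u 0 F \<le> u i"
proof -
  have "Min (u ` F) \<le> u i" using assms by simp
  moreover have "0 \<le> Max (insert 0 (u ` (A - F)))" using assms by simp
  ultimately have "Min (u ` F) - Max (insert 0 (u ` (A - F))) \<le> u i" by linarith
  then show ?thesis unfolding gap_def using assms(4) by simp
qed

lemma gap_pos:
  assumes "finite A" "finite F" "i \<in> F" "gap A u 0 F > 0"
  shows "u i > 0"
proof -
  have "Min (u ` F) \<le> u i" using assms by simp
  moreover have "0 \<le> Max (insert 0 (u ` (A - F)))" using assms by simp
  ultimately show ?thesis using assms(4) unfolding gap_def by linarith
qed

lemma gap_unique:
  assumes fA: "finite A" and F: "F \<subseteq> A" and G: "G \<subseteq> A" and c: "card F = card G"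
    and pF: "gap A u 0 F > 0" and pG: "gap A u 0 G > 0"
  shows "F = G"
proof (rule ccontr)
  assume ne: "F \<noteq> G"
  have fF: "finite F" and fG: "finite G" using F G fA finite_subset by auto
  have "\<not> F \<subseteq> G"
  proof
    assume "F \<subseteq> G" then have "F = G" using c fG card_subset_eq by blast
    then show False using ne by simp
  qed
  then obtain i where i: "i \<in> F" "i \<notin> G" by auto
  have "\<not> G \<subseteq> F"
  proof
    assume "G \<subseteq> F" then have "G = F" using c fF card_subset_eq by metis
    then show False using ne by simp
  qed
  then obtain j where j: "j \<in> G" "j \<notin> F" by auto
  have "u j < u i"
  proof -
    have "Min (u ` F) \<le> u i" using fF i by simp
    moreover have "u j \<le> Max (insert 0 (u ` (A - F)))" using j G fA by auto
    moreover have "Min (u ` F) - Max (insert 0 (u ` (A - F))) > 0" using pF unfolding gap_def by linarith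
    ultimately show ?thesis by linarith
  qed
  moreover have "u i < u j"
  proof -
    have "Min (u ` G) \<le> u j" using fG j by simp
    moreover have "u i \<le> Max (insert 0 (u ` (A - G)))" using i F fA by auto
    moreover have "Min (u ` G) - Max (insert 0 (u ` (A - G))) > 0" using pG unfolding gap_def by linarith
    ultimately show ?thesis by linarith
  qed
  ultimately show False by simp
qed

lemma sum_single:
  fixes h :: "'i \<Rightarrow> real" and c :: "'i \<Rightarrow> nat"
  assumes "finite X" "F \<in> X" "\<forall>G\<in>X. G \<noteq> F \<longrightarrow> h G = 0"
  shows "(\<Sum>G\<in>X. h G *\<^sub>R (real (c G), 1::real)) = h F *\<^sub>R (real (c F), 1)"
proof -
  have "(\<Sum>G\<in>X. h G *\<^sub>R (real (c G), 1::real)) = h F *\<^sub>R (real (c F), 1) + (\<Sum>G\<in>X - {F}. h G *\<^sub>R (real (c G), 1::real))"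
    using sum.remove[OF assms(1,2)] by simp
  also have "(\<Sum>G\<in>X - {F}. h G *\<^sub>R (real (c G), 1::real)) = 0"
    using assms(3) by (intro sum.neutral) (auto simp: zero_prod_def)
  finally show ?thesis by simp
qed

lemma determine:
  fixes h h' :: "'i \<Rightarrow> real" and c :: "'i \<Rightarrow> nat"
  assumes fin: "finite X" and inj: "inj_on c X"
    and nn: "\<forall>G\<in>X. 0 \<le> h G" "\<forall>G\<in>X. 0 \<le> h' G"
    and u1: "\<forall>F\<in>X. \<forall>G\<in>X. h F > 0 \<longrightarrow> h G > 0 \<longrightarrow> F = G"
    and u2: "\<forall>F\<in>X. \<forall>G\<in>X. h' F > 0 \<longrightarrow> h' G > 0 \<longrightarrow> F = G"
    and eq: "(\<Sum>G\<in>X. h G *\<^sub>R (real (c G), 1::real)) = (\<Sum>G\<in>X. h' G *\<^sub>R (real (c G), 1))"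
  shows "\<forall>G\<in>X. h G = h' G"
proof -
  have val: "(\<Sum>G\<in>X. k G *\<^sub>R (real (c G), 1::real)) =
      (if \<exists>F\<in>X. k F > 0 then (let F = (SOME F. F \<in> X \<and> k F > 0) in k F *\<^sub>R (real (c F), 1)) else 0)"
    if nk: "\<forall>G\<in>X. 0 \<le> k G" and uk: "\<forall>F\<in>X. \<forall>G\<in>X. k F > 0 \<longrightarrow> k G > 0 \<longrightarrow> F = G" for k
  proof (cases "\<exists>F\<in>X. k F > 0")
    case True
    define F where "F = (SOME F. F \<in> X \<and> k F > 0)"
    have F: "F \<in> X \<and> k F > 0" unfolding F_def using True someI_ex[of "\<lambda>F. F \<in> X \<and> k F > 0"] by blast
    have "\<forall>G\<in>X. G \<noteq> F \<longrightarrow> k G = 0"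
    proof (intro ballI impI)
      fix G assume G: "G \<in> X" "G \<noteq> F"
      then have "\<not> k G > 0" using uk F by blast
      then show "k G = 0" using nk G by force
    qed
    then show ?thesis using True sum_single[OF fin _ , of F k c] F unfolding F_def[symmetric] by (simp add: Let_def)
  next
    case False
    then have "\<forall>G\<in>X. k G = 0" using nk by (auto simp: not_less intro: antisym)
    then show ?thesis using False by (simp add: zero_prod_def[symmetric])
  qed
  note v1 = val[OF nn(1) u1] and v2 = val[OF nn(2) u2]
  show ?thesis
  proof (cases "\<exists>F\<in>X. h F > 0")
    case T1: True
    define F where "F = (SOME F. F \<in> X \<and> h F > 0)"
    have F: "F \<in> X \<and> h F > 0" unfolding F_def using T1 someI_ex[of "\<lambda>F. F \<in> X \<and> h F > 0"] by blast
    show ?thesis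
    proof (cases "\<exists>F\<in>X. h' F > 0")
      case T2: True
      define G where "G = (SOME F. F \<in> X \<and> h' F > 0)"
      have G: "G \<in> X \<and> h' G > 0" unfolding G_def using T2 someI_ex[of "\<lambda>F. F \<in> X \<and> h' F > 0"] by blast
      have e1: "(\<Sum>G\<in>X. h G *\<^sub>R (real (c G), 1::real)) = h F *\<^sub>R (real (c F), 1::real)"
        using v1 T1 unfolding F_def[symmetric] by (simp only: Let_def if_True)
      have e2: "(\<Sum>G\<in>X. h' G *\<^sub>R (real (c G), 1::real)) = h' G *\<^sub>R (real (c G), 1::real)"
        using v2 T2 unfolding G_def[symmetric] by (simp only: Let_def if_True)
      have "h F *\<^sub>R (real (c F), 1::real) = h' G *\<^sub>R (real (c G), 1)"
        using eq e1 e2 by metis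
      then have pe: "(h F * real (c F), h F) = (h' G * real (c G), h' G)"
        by (simp only: scaleR_Pair real_scaleR_def mult_1_right)
      then have hh: "h F = h' G" and hc: "h F * real (c F) = h' G * real (c G)"
        by (metis prod.inject)+
      then have "c F = c G" using F by simp
      then have FG: "F = G" using inj F G unfolding inj_on_def by blast
      show ?thesis
      proof
        fix H assume H: "H \<in> X"
        show "h H = h' H"
        proof (cases "H = F")
          case True then show ?thesis using hh FG by simp
        next
          case False
          have "\<not> h H > 0" using u1 F H False by blast
          moreover have "\<not> h' H > 0" using u2 G H False FG by blast
          moreover have "0 \<le> h H" "0 \<le> h' H" using nn H by auto
          ultimately show ?thesis by linarith
        qed
      qed
    next
      case False
      have "h F *\<^sub>R (real (c F), 1::real) = 0"
        using eq v1 v2 T1 False unfolding F_def[symmetric] by (simp add: Let_def)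
      then have "h F = 0" by (simp add: prod_eq_iff)
      then show ?thesis using F by simp
    qed
  next
    case T1: False
    show ?thesis
    proof (cases "\<exists>F\<in>X. h' F > 0")
      case T2: True
      define G where "G = (SOME F. F \<in> X \<and> h' F > 0)"
      have G: "G \<in> X \<and> h' G > 0" unfolding G_def using T2 someI_ex[of "\<lambda>F. F \<in> X \<and> h' F > 0"] by blast
      have "h' G *\<^sub>R (real (c G), 1::real) = 0"
        using eq v1 v2 T1 T2 unfolding G_def[symmetric] by (simp add: Let_def)
      then have "h' G = 0" by (simp add: prod_eq_iff)
      then show ?thesis using G by simp
    next
      case False
      then show ?thesis using T1 nn by (metis antisym not_less)
    qed
  qed
qed



definition vert :: "'a::euclidean_space set \<Rightarrow> 'a set" where
  "vert S = {v. v extreme_point_of S}"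

lemma bary_unique:
  fixes C :: "'a::euclidean_space set"
  assumes "finite C" "\<not> affine_dependent C" "sum a C = 1" "sum b C = 1"
    "(\<Sum>v\<in>C. a v *\<^sub>R v) = (\<Sum>v\<in>C. b v *\<^sub>R v)" "v \<in> C"
  shows "a v = b v"
proof -
  have "sum (\<lambda>v. a v - b v) C = 0" using assms by (simp add: sum_subtractf)
  moreover have "(\<Sum>v\<in>C. (a v - b v) *\<^sub>R v) = 0"
    using assms by (simp add: scaleR_diff_left sum_subtractf)
  ultimately have "\<forall>v\<in>C. a v - b v = 0"
    using assms(2) affine_dependent_explicit_finite[OF assms(1)] by blast
  then show ?thesis using assms(6) by simp
qed

locale cplx =
  fixes K :: "'a::euclidean_space set set" and n :: nat and e :: "nat \<Rightarrow> 'a" and N :: nat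
  assumes sc: "simplicial_complex K"
    and dimK: "\<forall>S\<in>K. \<forall>k. k simplex S \<longrightarrow> k \<le> int n"
    and bij: "bij_betw e {0..<N} (\<Union>S\<in>K. vert S)"
begin

lemma vert_props:
  assumes "S \<in> K"
  shows "finite (vert S)" "\<not> affine_dependent (vert S)" "S = convex hull (vert S)"
    "card (vert S) \<le> Suc n"
proof -
  obtain k where "k simplex S" using sc assms unfolding simplicial_complex_def by blast
  then obtain C where C: "\<not> affine_dependent C" "int (card C) = k + 1" "S = convex hull C"
    unfolding simplex_def by blast
  have vC: "vert S = C" unfolding vert_def C(3)
    using extreme_point_of_convex_hull_affine_independent[OF C(1)] by auto
  show "\<not> affine_dependent (vert S)" "S = convex hull (vert S)" using vC C by auto
  show "finite (vert S)" using vC C(1) aff_independent_finite by auto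
  have "k \<le> int n" using dimK assms \<open>k simplex S\<close> by blast
  then have "int (card C) \<le> int (Suc n)" using C(2) by simp
  then have "card C \<le> Suc n" by (simp only: of_nat_le_iff)
  then show "card (vert S) \<le> Suc n" using vC by simp
qed

definition A :: "nat set" where "A = {0..<N}"

definition I :: "'a set \<Rightarrow> nat set" where "I S = {i \<in> A. e i \<in> vert S}"

definition Q :: "'a set \<Rightarrow> (nat \<Rightarrow> real) set" where
  "Q S = {u. (\<forall>i. 0 \<le> u i) \<and> (\<forall>i. i \<notin> I S \<longrightarrow> u i = 0) \<and> sum u A = 1}"

definition L :: "(nat \<Rightarrow> real) \<Rightarrow> 'a" where
  "L u = (\<Sum>i\<in>A. u i *\<^sub>R e i)"

definition hat :: "(nat \<Rightarrow> real) \<Rightarrow> 'a \<Rightarrow> real" where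
  "hat u v = u (inv_into A e v)"

lemma inj_e: "inj_on e A" using bij unfolding A_def bij_betw_def by auto

lemma vert_sub: "S \<in> K \<Longrightarrow> vert S \<subseteq> e ` A"
  using bij unfolding A_def bij_betw_def by auto

lemma eI: "S \<in> K \<Longrightarrow> e ` I S = vert S"
  using vert_sub unfolding I_def by auto

lemma hat_e: "i \<in> A \<Longrightarrow> hat u (e i) = u i"
  unfolding hat_def using inj_e by simp

lemma IA: "I S \<subseteq> A" unfolding I_def by auto

lemma finA: "finite A" unfolding A_def by simp

lemma sum_I: "(\<forall>i. i \<notin> I S \<longrightarrow> u i = 0) \<Longrightarrow> sum f A = sum f (I S)" if "\<And>i. u i = 0 \<Longrightarrow> f i = 0"
  for f :: "nat \<Rightarrow> 'b::comm_monoid_add"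
  using that by (intro sum.mono_neutral_right[OF finA IA]) auto

lemma rep:
  assumes S: "S \<in> K" and u: "u \<in> Q S"
  shows "sum (hat u) (vert S) = 1" "L u = (\<Sum>v\<in>vert S. hat u v *\<^sub>R v)"
proof -
  have z: "\<forall>i. i \<notin> I S \<longrightarrow> u i = 0" using u unfolding Q_def by auto
  have inj: "inj_on e (I S)" using inj_e IA inj_on_subset by blast
  have "sum (hat u) (vert S) = sum (hat u \<circ> e) (I S)"
    using sum.reindex[OF inj, of "hat u"] eI[OF S] by simp
  also have "\<dots> = sum u (I S)" using IA[of S] by (intro sum.cong) (auto simp: hat_e)
  also have "\<dots> = sum u A" by (rule sum_I[symmetric, OF _ z]) auto
  finally show "sum (hat u) (vert S) = 1" using u unfolding Q_def by simp
  have "(\<Sum>v\<in>vert S. hat u v *\<^sub>R v) = (\<Sum>i\<in>I S. hat u (e i) *\<^sub>R e i)"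
    using sum.reindex[OF inj, of "\<lambda>v. hat u v *\<^sub>R v"] eI[OF S] by simp
  also have "\<dots> = (\<Sum>i\<in>I S. u i *\<^sub>R e i)" using IA[of S] by (intro sum.cong) (auto simp: hat_e)
  also have "\<dots> = L u" unfolding L_def by (rule sum_I[symmetric, OF _ z]) auto
  finally show "L u = (\<Sum>v\<in>vert S. hat u v *\<^sub>R v)" by simp
qed


lemma L_image: assumes S: "S \<in> K" shows "L ` Q S = S"
proof
  show "L ` Q S \<subseteq> S"
  proof
    fix x assume "x \<in> L ` Q S"
    then obtain u where u: "u \<in> Q S" "x = L u" by auto
    have h0: "\<forall>v\<in>vert S. 0 \<le> hat u v" using u unfolding Q_def hat_def by auto
    have "x \<in> {y. \<exists>w. (\<forall>x\<in>vert S. 0 \<le> w x) \<and> sum w (vert S) = 1 \<and> (\<Sum>x\<in>vert S. w x *\<^sub>R x) = y}"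
      apply (rule CollectI)
      apply (rule exI[of _ "hat u"])
      using h0 rep[OF S u(1)] u(2) by simp
    then have "x \<in> convex hull (vert S)" unfolding convex_hull_finite[OF vert_props(1)[OF S]] .
    then show "x \<in> S" using vert_props(3)[OF S] by simp
  qed
  show "S \<subseteq> L ` Q S"
  proof
    fix x assume x: "x \<in> S"
    have "x \<in> convex hull (vert S)" using x vert_props(3)[OF S] by simp
    then obtain w where w: "\<forall>v\<in>vert S. 0 \<le> w v" "sum w (vert S) = 1"
        "(\<Sum>v\<in>vert S. w v *\<^sub>R v) = x"
      unfolding convex_hull_finite[OF vert_props(1)[OF S]] by (auto simp only: mem_Collect_eq)
    define u where "u = (\<lambda>i. if i \<in> I S then w (e i) else 0)"
    have inj: "inj_on e (I S)" using inj_e IA inj_on_subset by blast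
    have s1: "sum u A = 1"
    proof -
      have "sum u A = sum u (I S)" by (rule sum_I[of u]) (auto simp: u_def)
      also have "\<dots> = sum (w \<circ> e) (I S)" by (intro sum.cong) (auto simp: u_def)
      also have "\<dots> = sum w (vert S)" using sum.reindex[OF inj, of w] eI[OF S] by simp
      finally show ?thesis using w by simp
    qed
    have uQ: "u \<in> Q S" unfolding Q_def
    proof (intro CollectI conjI allI impI)
      fix i show "0 \<le> u i" using w(1) eI[OF S] unfolding u_def by auto
    qed (use s1 in \<open>auto simp: u_def\<close>)
    have "L u = (\<Sum>i\<in>I S. u i *\<^sub>R e i)" unfolding L_def by (rule sum_I[of u]) (auto simp: u_def)
    also have "\<dots> = (\<Sum>i\<in>I S. w (e i) *\<^sub>R e i)" by (intro sum.cong) (auto simp: u_def)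
    also have "\<dots> = x" using sum.reindex[OF inj, of "\<lambda>v. w v *\<^sub>R v"] eI[OF S] w(3) by simp
    finally show "x \<in> L ` Q S" using uQ by auto
  qed
qed

lemma face_of_subst: "F face_of S \<Longrightarrow> S = X \<Longrightarrow> F face_of X" by simp

lemma ext_rep:
  fixes C :: "'a set"
  assumes "finite C" "D \<subseteq> C" "sum w D = 1" "(\<Sum>v\<in>D. w v *\<^sub>R v) = x"
  shows "sum (\<lambda>v. if v \<in> D then w v else 0) C = 1"
    "(\<Sum>v\<in>C. (if v \<in> D then w v else 0) *\<^sub>R v) = x"
proof -
  have "sum (\<lambda>v. if v \<in> D then w v else 0) C = sum w (C \<inter> D)"
    using sum.inter_restrict[OF assms(1), of w D] by simp
  then show "sum (\<lambda>v. if v \<in> D then w v else 0) C = 1" using assms by (simp add: Int_absorb1)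
  have "(\<Sum>v\<in>C. (if v \<in> D then w v else 0) *\<^sub>R v) = (\<Sum>v\<in>C. if v \<in> D then w v *\<^sub>R v else 0)"
    by (intro sum.cong) auto
  also have "\<dots> = (\<Sum>v\<in>C \<inter> D. w v *\<^sub>R v)" using sum.inter_restrict[OF assms(1), of "\<lambda>v. w v *\<^sub>R v" D] by simp
  finally show "(\<Sum>v\<in>C. (if v \<in> D then w v else 0) *\<^sub>R v) = x" using assms by (simp add: Int_absorb1)
qed

lemma hat_eq:
  assumes S: "S \<in> K" and u: "u \<in> Q S" and D: "D \<subseteq> vert S" "sum w D = 1" "(\<Sum>v\<in>D. w v *\<^sub>R v) = L u"
    and v: "v \<in> vert S"
  shows "hat u v = (if v \<in> D then w v else 0)"
  using bary_unique[OF vert_props(1,2)[OF S] rep(1)[OF S u] ext_rep(1)[OF vert_props(1)[OF S] D]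
      _ v] rep(2)[OF S u] ext_rep(2)[OF vert_props(1)[OF S] D] by simp

lemma L_inj:
  assumes S: "S \<in> K" and T: "T \<in> K" and u: "u \<in> Q S" and u': "u' \<in> Q T" and eq: "L u = L u'"
  shows "u = u'"
proof -
  define x where "x = L u"
  have xS: "x \<in> S" using L_image[OF S] u unfolding x_def by auto
  have xT: "x \<in> T" using L_image[OF T] u' eq unfolding x_def by auto
  have "(S \<inter> T) face_of S" using sc S T unfolding simplicial_complex_def by blast
  then have f1: "(S \<inter> T) face_of convex hull (vert S)"
    using vert_props(3)[OF S] by (rule face_of_subst)
  have "(T \<inter> S) face_of T" using sc S T unfolding simplicial_complex_def by blast
  then have f2: "(T \<inter> S) face_of convex hull (vert T)"
    using vert_props(3)[OF T] by (rule face_of_subst)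
  obtain D where D: "D \<subseteq> vert S" "S \<inter> T = convex hull D"
    using f1 face_of_convex_hull_affine_independent[OF vert_props(2)[OF S]] by blast
  obtain D' where D': "D' \<subseteq> vert T" "T \<inter> S = convex hull D'"
    using f2 face_of_convex_hull_affine_independent[OF vert_props(2)[OF T]] by blast
  have iD: "\<not> affine_dependent D" using D(1) vert_props(2)[OF S] affine_independent_subset by blast
  have iD': "\<not> affine_dependent D'" using D'(1) vert_props(2)[OF T] affine_independent_subset by blast
  have DD: "D = D'"
  proof -
    have "convex hull D = convex hull D'" using D(2) D'(2) by auto
    show ?thesis
    proof (rule set_eqI)
      fix v show "v \<in> D \<longleftrightarrow> v \<in> D'"
        using extreme_point_of_convex_hull_affine_independent[OF iD, of v]
          extreme_point_of_convex_hull_affine_independent[OF iD', of v] \<open>convex hull D = convex hull D'\<close>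
        by simp
    qed
  qed
  have finD: "finite D" using D(1) vert_props(1)[OF S] finite_subset by blast
  have "x \<in> convex hull D" using xS xT D(2) by auto
  then obtain w where w: "\<forall>v\<in>D. 0 \<le> w v" "sum w D = 1" "(\<Sum>v\<in>D. w v *\<^sub>R v) = x"
    unfolding convex_hull_finite[OF finD] by (auto simp only: mem_Collect_eq)
  have hS: "hat u v = (if v \<in> D then w v else 0)" if "v \<in> vert S" for v
    using hat_eq[OF S u D(1) w(2) w(3)[unfolded x_def] that] .
  have hT: "hat u' v = (if v \<in> D then w v else 0)" if "v \<in> vert T" for v
    using hat_eq[OF T u' D'(1)[folded DD] w(2) w(3)[unfolded x_def eq] that] .
  have zS: "\<And>i. i \<notin> I S \<Longrightarrow> u i = 0" using u unfolding Q_def by auto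
  have zT: "\<And>i. i \<notin> I T \<Longrightarrow> u' i = 0" using u' unfolding Q_def by auto
  show "u = u'"
  proof
    fix i
    show "u i = u' i"
    proof (cases "i \<in> A")
      case False
      then have "i \<notin> I S" "i \<notin> I T" by (auto simp: I_def)
      then show ?thesis using zS zT by simp
    next
      case iA: True
      have eS: "e i \<in> vert S \<longleftrightarrow> i \<in> I S" using iA by (simp add: I_def)
      have eT: "e i \<in> vert T \<longleftrightarrow> i \<in> I T" using iA by (simp add: I_def)
      have uS: "e i \<in> vert S \<Longrightarrow> u i = (if e i \<in> D then w (e i) else 0)"
        using hS[of "e i"] hat_e[OF iA, of u] by simp
      have uT: "e i \<in> vert T \<Longrightarrow> u' i = (if e i \<in> D then w (e i) else 0)"
        using hT[of "e i"] hat_e[OF iA, of u'] by simp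
      have DS: "e i \<in> D \<Longrightarrow> e i \<in> vert S" using D(1) by blast
      have DT: "e i \<in> D \<Longrightarrow> e i \<in> vert T" using D'(1) DD by blast
      show ?thesis
      proof (cases "e i \<in> D")
        case True then show ?thesis using uS uT DS DT by simp
      next
        case nD: False
        have a: "u i = 0"
        proof (cases "e i \<in> vert S")
          case True then show ?thesis using uS nD by simp
        next
          case False then show ?thesis using zS eS by blast
        qed
        have b: "u' i = 0"
        proof (cases "e i \<in> vert T")
          case True then show ?thesis using uT nD by simp
        next
          case False then show ?thesis using zT eT by blast
        qed
        show ?thesis using a b by simp
      qed
    qed
  qed
qed

definition Qa where "Qa = (\<Union>S\<in>K. Q S)"
definition Z where "Z = Qa \<times> {0..1::real}"
definition Th :: "(nat \<Rightarrow> real) \<times> real \<Rightarrow> 'a \<times> real" where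
  "Th z = (snd z *\<^sub>R L (fst z), snd z)"
definition Fs :: "nat \<Rightarrow> nat set set" where "Fs j = {F. F \<subseteq> A \<and> card F = Suc j}"
definition Ps :: "(nat set \<Rightarrow> nat) \<Rightarrow> (nat \<Rightarrow> real) \<times> real \<Rightarrow> nat \<Rightarrow> real \<times> real" where
  "Ps c z = (\<lambda>j. if j \<le> n then (\<Sum>F\<in>Fs j. (snd z * gap A (fst z) 0 F) *\<^sub>R (real (c F), 1)) else 0)"

lemma finK: "finite K" using sc unfolding simplicial_complex_def by simp

lemma Q_nonneg: "u \<in> Q S \<Longrightarrow> 0 \<le> u i" unfolding Q_def by auto
lemma Q_zero: "u \<in> Q S \<Longrightarrow> i \<notin> I S \<Longrightarrow> u i = 0" unfolding Q_def by auto
lemma Q_sum: "u \<in> Q S \<Longrightarrow> sum u A = 1" unfolding Q_def by auto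

lemma Q_le1: assumes "u \<in> Q S" shows "u i \<le> 1"
proof (cases "i \<in> A")
  case True
  have "u i \<le> sum u A" using True finA Q_nonneg[OF assms] by (intro member_le_sum) auto
  then show ?thesis using Q_sum[OF assms] by simp
next
  case False then have "i \<notin> I S" using IA by auto
  then show ?thesis using Q_zero[OF assms] by simp
qed

lemma compact_Q: "compact (Q S)"
proof -
  have cl: "closed (Q S)"
  proof -
    have eq: "Q S = (\<Inter>i. {u. 0 \<le> u i}) \<inter> (\<Inter>i\<in>- I S. {u. u i = 0}) \<inter> {u. sum u A = 1}"
      unfolding Q_def by auto
    have c1: "closed {u::nat\<Rightarrow>real. 0 \<le> u i}" for i
      by (rule closed_Collect_le) (auto intro: continuous_intros cont_coord)
    have c2: "closed {u::nat\<Rightarrow>real. u i = 0}" for i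
      by (rule closed_Collect_eq) (auto intro: continuous_intros cont_coord)
    have c3: "closed {u::nat\<Rightarrow>real. sum u A = 1}"
      by (rule closed_Collect_eq) (auto intro!: continuous_intros cont_coord)
    show ?thesis unfolding eq using c1 c2 c3 by (intro closed_Int closed_INT) auto
  qed
  have "Q S = {u::nat\<Rightarrow>real. \<forall>i. u i \<in> {0..1}} \<inter> Q S"
    using Q_nonneg Q_le1 by auto
  then show ?thesis using compact_Int_closed[OF compact_cube cl] by simp
qed

lemma compact_Z: "compact Z"
  unfolding Z_def Qa_def using finK compact_Q
  by (intro compact_Times compact_UN) auto

lemma cont_fst_coord: "continuous_on S (\<lambda>z::(nat\<Rightarrow>real)\<times>'b::topological_space. fst z i)"
  using continuous_on_compose[of S fst "\<lambda>u. u i", OF continuous_on_fst[OF continuous_on_id] cont_coord]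
  by (simp add: o_def)

lemma cont_Th: "continuous_on Z Th"
  unfolding Th_def L_def
  by (intro continuous_intros cont_fst_coord)

lemma Fs_props: assumes "F \<in> Fs j" shows "F \<subseteq> A" "finite F" "F \<noteq> {}" "card F = Suc j"
  using assms finA finite_subset unfolding Fs_def by auto

lemma finFs: "finite (Fs j)"
  unfolding Fs_def using finA by (auto intro: finite_subset[of _ "Pow A"])

lemma cont_Ps: "continuous_on Z (Ps c)"
proof (rule continuous_on_coordinatewise_then_product)
  fix j
  show "continuous_on Z (\<lambda>z. Ps c z j)"
  proof (cases "j \<le> n")
    case True
    have "continuous_on Z (\<lambda>z. gap A (fst z) 0 F)" if "F \<in> Fs j" for F
      using continuous_on_compose[of Z fst "\<lambda>u. gap A u 0 F", OF continuous_on_fst[OF continuous_on_id]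
          cont_gap[OF finA Fs_props(2,3)[OF that]]] by (simp add: o_def)
    then have "continuous_on Z (\<lambda>z. \<Sum>F\<in>Fs j. (snd z * gap A (fst z) 0 F) *\<^sub>R (real (c F), 1::real))"
      by (intro continuous_intros) auto
    then show ?thesis unfolding Ps_def using True by simp
  next
    case False then show ?thesis unfolding Ps_def by simp
  qed
qed

lemma Th_image: "Th ` Z = cone_over (\<Union>K)"
proof -
  have LQ: "L ` Qa = \<Union>K" unfolding Qa_def using L_image by (auto simp: image_UN)
  show ?thesis
  proof
    show "Th ` Z \<subseteq> cone_over (\<Union>K)"
    proof
      fix p assume "p \<in> Th ` Z"
      then obtain u t where ut: "u \<in> Qa" "t \<in> {0..1}" "p = (t *\<^sub>R L u, t)"
        unfolding Z_def Th_def by auto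
      have "L u \<in> \<Union>K" using LQ ut(1) by auto
      then show "p \<in> cone_over (\<Union>K)" unfolding cone_over_def using ut by auto
    qed
    show "cone_over (\<Union>K) \<subseteq> Th ` Z"
    proof
      fix p assume "p \<in> cone_over (\<Union>K)"
      then obtain x t where xt: "x \<in> \<Union>K" "0 \<le> t" "t \<le> 1" "p = (t *\<^sub>R x, t)"
        unfolding cone_over_def by auto
      obtain u where u: "u \<in> Qa" "x = L u" using xt(1) LQ by (metis imageE)
      have "(u, t) \<in> Z" unfolding Z_def using u xt by auto
      moreover have "Th (u, t) = p" unfolding Th_def using u xt by simp
      ultimately show "p \<in> Th ` Z" by force
    qed
  qed
qed

lemma card_I: "S \<in> K \<Longrightarrow> card (I S) \<le> Suc n"
proof -
  assume S: "S \<in> K"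
  have inj: "inj_on e (I S)" using inj_e IA inj_on_subset by blast
  have "card (I S) = card (vert S)" using card_image[OF inj] eI[OF S] by simp
  then show ?thesis using vert_props(4)[OF S] by simp
qed

lemma gap_big_zero:
  assumes S: "S \<in> K" and u: "u \<in> Q S" and F: "F \<subseteq> A" and big: "card F > Suc n"
  shows "gap A u 0 F = 0"
proof (rule ccontr)
  assume "gap A u 0 F \<noteq> 0"
  then have pos: "gap A u 0 F > 0" using gap_nonneg[of A u 0 F] by simp
  have fF: "finite F" using F finA finite_subset by blast
  have "F \<subseteq> I S"
  proof
    fix i assume i: "i \<in> F"
    have "u i > 0" using gap_pos[OF finA fF i pos] .
    then show "i \<in> I S" using Q_zero[OF u, of i] by force
  qed
  then have "card F \<le> card (I S)" using card_mono[OF finite_subset[OF IA finA]] by blast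
  then show False using card_I[OF S] big by simp
qed

lemma Ps_eq_imp:
  assumes S: "S \<in> K" and T: "T \<in> K" and u: "u \<in> Q S" and u': "u' \<in> Q T"
    and t: "0 \<le> t" and t': "0 \<le> t'"
    and injc: "inj_on c (Pow A)"
    and eq: "Ps c (u, t) = Ps c (u', t')"
  shows "t = t' \<and> (t = 0 \<or> u = u')"
proof -
  have g: "t * gap A u 0 F = t' * gap A u' 0 F" if F: "F \<subseteq> A" "F \<noteq> {}" for F
  proof (cases "card F \<le> Suc n")
    case True
    have fF: "finite F" using F finA finite_subset by blast
    define j where "j = card F - 1"
    have cF: "card F = Suc j" using F fF unfolding j_def by (simp add: card_gt_0_iff)
    have jn: "j \<le> n" using True cF by simp
    have FX: "F \<in> Fs j" unfolding Fs_def using F cF by simp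
    have ej: "Ps c (u, t) j = Ps c (u', t') j" using eq by simp
    have pos_u: "\<forall>F\<in>Fs j. \<forall>G\<in>Fs j. t * gap A u 0 F > 0 \<longrightarrow> t * gap A u 0 G > 0 \<longrightarrow> F = G"
    proof (intro ballI impI)
      fix F G assume FG: "F \<in> Fs j" "G \<in> Fs j" "t * gap A u 0 F > 0" "t * gap A u 0 G > 0"
      then have "gap A u 0 F > 0" "gap A u 0 G > 0" using t gap_nonneg[of A u 0]
        by (auto simp: zero_less_mult_iff)
      then show "F = G" using gap_unique[OF finA Fs_props(1)[OF FG(1)] Fs_props(1)[OF FG(2)]]
          Fs_props(4)[OF FG(1)] Fs_props(4)[OF FG(2)] by simp
    qed
    have pos_u': "\<forall>F\<in>Fs j. \<forall>G\<in>Fs j. t' * gap A u' 0 F > 0 \<longrightarrow> t' * gap A u' 0 G > 0 \<longrightarrow> F = G"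
    proof (intro ballI impI)
      fix F G assume FG: "F \<in> Fs j" "G \<in> Fs j" "t' * gap A u' 0 F > 0" "t' * gap A u' 0 G > 0"
      then have "gap A u' 0 F > 0" "gap A u' 0 G > 0" using t' gap_nonneg[of A u' 0]
        by (auto simp: zero_less_mult_iff)
      then show "F = G" using gap_unique[OF finA Fs_props(1)[OF FG(1)] Fs_props(1)[OF FG(2)]]
          Fs_props(4)[OF FG(1)] Fs_props(4)[OF FG(2)] by simp
    qed
    have injX: "inj_on c (Fs j)" using injc by (rule inj_on_subset) (auto simp: Fs_def)
    have "\<forall>G\<in>Fs j. t * gap A u 0 G = t' * gap A u' 0 G"
      by (rule determine[OF finFs injX _ _ pos_u pos_u'])
        (use ej jn t t' gap_nonneg in \<open>auto simp: Ps_def\<close>)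
    then show ?thesis using FX by blast
  next
    case False
    then show ?thesis using gap_big_zero[OF S u F(1)] gap_big_zero[OF T u' F(1)] by simp
  qed
  have tu: "t * u i = t' * u' i" if i: "i \<in> A" for i
  proof -
    have "u i = (\<Sum>F\<in>{F. F \<subseteq> A \<and> F \<noteq> {} \<and> i \<in> F}. gap A u 0 F)"
      using gap_tele[OF finA _ i, of 0 u] Q_nonneg[OF u] by simp
    moreover have "u' i = (\<Sum>F\<in>{F. F \<subseteq> A \<and> F \<noteq> {} \<and> i \<in> F}. gap A u' 0 F)"
      using gap_tele[OF finA _ i, of 0 u'] Q_nonneg[OF u'] by simp
    ultimately show ?thesis using g by (simp add: sum_distrib_left)
  qed
  have tt: "t = t'"
  proof -
    have "t = t * sum u A" using Q_sum[OF u] by simp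
    also have "\<dots> = (\<Sum>i\<in>A. t' * u' i)" using tu by (simp add: sum_distrib_left)
    also have "\<dots> = t'" using Q_sum[OF u'] by (simp add: sum_distrib_left[symmetric])
    finally show ?thesis .
  qed
  have "u = u'" if "t \<noteq> 0"
  proof
    fix i show "u i = u' i"
    proof (cases "i \<in> A")
      case True then show ?thesis using tu[OF True] tt that by simp
    next
      case False then have "i \<notin> I S" "i \<notin> I T" using IA by auto
      then show ?thesis using Q_zero[OF u] Q_zero[OF u'] by simp
    qed
  qed
  then show ?thesis using tt by blast
qed

lemma fibres:
  assumes z: "z \<in> Z" and z': "z' \<in> Z" and injc: "inj_on c (Pow A)"
  shows "Th z = Th z' \<longleftrightarrow> Ps c z = Ps c z'"
proof -
  obtain u t where zz: "z = (u, t)" "u \<in> Qa" "0 \<le> t" "t \<le> 1" using z unfolding Z_def by auto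
  obtain u' t' where zz': "z' = (u', t')" "u' \<in> Qa" "0 \<le> t'" "t' \<le> 1" using z' unfolding Z_def by auto
  obtain S where S: "S \<in> K" "u \<in> Q S" using zz(2) unfolding Qa_def by auto
  obtain T where T: "T \<in> K" "u' \<in> Q T" using zz'(2) unfolding Qa_def by auto
  have "Th z = Th z' \<longleftrightarrow> t = t' \<and> (t = 0 \<or> u = u')"
  proof
    assume "Th z = Th z'"
    then have "t = t'" "t *\<^sub>R L u = t' *\<^sub>R L u'" unfolding Th_def zz zz' by auto
    then show "t = t' \<and> (t = 0 \<or> u = u')" using L_inj[OF S(1) T(1) S(2) T(2)] by auto
  next
    assume "t = t' \<and> (t = 0 \<or> u = u')"
    then show "Th z = Th z'" unfolding Th_def zz zz' by auto
  qed
  moreover have "Ps c z = Ps c z' \<longleftrightarrow> t = t' \<and> (t = 0 \<or> u = u')"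
  proof
    assume "Ps c z = Ps c z'"
    then show "t = t' \<and> (t = 0 \<or> u = u')"
      using Ps_eq_imp[OF S(1) T(1) S(2) T(2) zz(3) zz'(3) injc] unfolding zz zz' by blast
  next
    assume "t = t' \<and> (t = 0 \<or> u = u')"
    then show "Ps c z = Ps c z'" unfolding Ps_def zz zz' by auto
  qed
  ultimately show ?thesis by simp
qed

lemma Ps_image:
  assumes bc: "bij_betw c (Pow A) {0..<m}"
  shows "Ps c ` Z \<subseteq> power_space n (m_od m)"
proof
  fix p assume "p \<in> Ps c ` Z"
  then obtain u t where ut: "u \<in> Qa" "0 \<le> t" "t \<le> 1" "p = Ps c (u, t)" unfolding Z_def by auto
  obtain S where S: "S \<in> K" "u \<in> Q S" using ut(1) unfolding Qa_def by auto
  have m0: "0 < m"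
  proof -
    have "{} \<in> Pow A" by simp
    then have "c {} \<in> {0..<m}" using bc unfolding bij_betw_def by auto
    then show ?thesis by simp
  qed
  have "p j \<in> m_od m" if j: "j \<le> n" for j
  proof -
    define h where "h = (\<lambda>F. t * gap A u 0 F)"
    have pj: "p j = (\<Sum>F\<in>Fs j. h F *\<^sub>R (real (c F), 1::real))"
      unfolding ut(4) Ps_def h_def using j by simp
    have hnn: "0 \<le> h F" for F unfolding h_def using ut(2) gap_nonneg by simp
    show ?thesis
    proof (cases "\<exists>F\<in>Fs j. h F > 0")
      case True
      then obtain F where F: "F \<in> Fs j" "h F > 0" by auto
      have others: "\<forall>G\<in>Fs j. G \<noteq> F \<longrightarrow> h G = 0"
      proof (intro ballI impI)
        fix G assume G: "G \<in> Fs j" "G \<noteq> F"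
        show "h G = 0"
        proof (rule ccontr)
          assume "h G \<noteq> 0" then have "h G > 0" using hnn[of G] by simp
          then have "gap A u 0 G > 0" "gap A u 0 F > 0" using F(2) ut(2) gap_nonneg[of A u 0]
            by (auto simp: h_def zero_less_mult_iff)
          then have "G = F" using gap_unique[OF finA Fs_props(1)[OF G(1)] Fs_props(1)[OF F(1)]]
              Fs_props(4)[OF F(1)] Fs_props(4)[OF G(1)] by simp
          then show False using G by simp
        qed
      qed
      have p2: "p j = (h F *\<^sub>R real (c F), h F)"
        unfolding pj sum_single[OF finFs F(1) others] by simp
      obtain i where i: "i \<in> F" using Fs_props(3)[OF F(1)] by auto
      have "gap A u 0 F \<le> u i" using gap_le[OF finA Fs_props(2)[OF F(1)] i Q_nonneg[OF S(2)]] .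
      then have "gap A u 0 F \<le> 1" using Q_le1[OF S(2), of i] by simp
      then have h1: "h F \<le> 1" unfolding h_def using ut(2,3) gap_nonneg[of A u 0 F]
        by (metis mult_le_one)
      have "c F < m" using bc Fs_props(1)[OF F(1)] unfolding bij_betw_def by auto
      then show ?thesis unfolding p2 m_od_def cone_over_def using hnn[of F] h1 by blast
    next
      case False
      then have "\<forall>G\<in>Fs j. h G = 0" using hnn by (metis antisym not_less)
      then have "p j = 0" unfolding pj by (simp add: zero_prod_def[symmetric])
      moreover have "(0 *\<^sub>R real (0::nat), 0::real) \<in> m_od m"
      proof -
        have r0: "real (0::nat) \<in> {real k |k. k < m}" using m0 by blast
        show ?thesis unfolding m_od_def cone_over_def
          by (rule CollectI, rule exI[of _ "real 0"], rule exI[of _ "0::real"]) (use r0 in simp)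
      qed
      ultimately show ?thesis by (simp add: zero_prod_def)
    qed
  qed
  moreover have "p j = 0" if "j > n" for j unfolding ut(4) Ps_def using that by simp
  ultimately show "p \<in> power_space n (m_od m)" unfolding power_space_def by auto
qed

end

lemma vert_finite:
  assumes "simplicial_complex K" "S \<in> K" shows "finite (vert S)"
proof -
  obtain k where "k simplex S" using assms unfolding simplicial_complex_def by blast
  then obtain C where C: "\<not> affine_dependent C" "S = convex hull C"
    unfolding simplex_def by blast
  have "vert S = C" unfolding vert_def C(2)
    using extreme_point_of_convex_hull_affine_independent[OF C(1)] by auto
  then show ?thesis using C(1) aff_independent_finite by auto
qed

theorem mainTheorem15:
  fixes P :: "'a::euclidean_space set" and n :: nat
  assumes "polyhedron_of_dim n P"
  shows "\<exists>m::nat. \<exists>Y. Y \<subseteq> power_space n (m_od m) \<and> cone_over P homeomorphic Y"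
proof -
  obtain K where K: "simplicial_complex K" "\<Union>K = P" "\<forall>S\<in>K. \<forall>k. k simplex S \<longrightarrow> k \<le> int n"
    using assms unfolding polyhedron_of_dim_def by blast
  define V where "V = (\<Union>S\<in>K. vert S)"
  have "finite V" unfolding V_def using K(1) vert_finite simplicial_complex_def by auto
  then obtain e where e: "bij_betw e {0..<card V} V" using ex_bij_betw_nat_finite by blast
  interpret cplx K n e "card V" using K e unfolding V_def by unfold_locales auto
  obtain c where c: "bij_betw c (Pow A) {0..<card (Pow A)}"
    using ex_bij_betw_finite_nat finA by blast
  have injc: "inj_on c (Pow A)" using c bij_betw_def by blast
  have "Th ` Z homeomorphic Ps c ` Z"
    using homeomorphic_same_fibres[OF compact_Z cont_Th cont_Ps] fibres[OF _ _ injc] by blast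
  then have "cone_over P homeomorphic Ps c ` Z" using Th_image K(2) by simp
  then show ?thesis using Ps_image[OF c] by blast
qed

end
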